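(* Let $H$ be a complex infinite-dimensional separable Hilbert space and let $(f_n)_{n=1}^\infty$ be a frame for $H$ with analysis operator $U$. The following are equivalent: (a) $\dim\operatorname{Im}(I-U^*U)<\infty$; (b) there exist a finite-dimensional subspace $L$ of $H$ and a sequence $(g_n)_{n=1}^\infty$ in $L$ such that $(f_n+g_n)_{n=1}^\infty$ is a Parseval frame for $H$; (c) there is a closed subspace $M$ of $H$ of finite codimension such that $x=\sum_{n=1}^\infty\langle x,f_n\rangle f_n$ for all $x\in M$.
   Context: A frame: there are $0<A\le B$ with $A\|x\|^2\le\sum_n|\langle x,f_n\rangle|^2\le B\|x\|^2$ for all $x\in H$. A Parseval frame: $\sum_n|\langle x,h_n\rangle|^2=\|x\|^2$ for all $x$. The analysis operator is $U:H\to\ell^2$, $Ux=(\langle x,f_n\rangle)_n$. *)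

theory Defs
  imports "HOL-Analysis.Analysis"
begin

class complex_inner = real_normed_vector +
  fixes scaleC :: "complex \<Rightarrow> 'a \<Rightarrow> 'a" (infixr "*\<^sub>C" 75)
    and cinner :: "'a \<Rightarrow> 'a \<Rightarrow> complex"
  assumes scaleC_add_right: "a *\<^sub>C (x + y) = a *\<^sub>C x + a *\<^sub>C y"
    and scaleC_add_left: "(a + b) *\<^sub>C x = a *\<^sub>C x + b *\<^sub>C x"
    and scaleC_scaleC: "a *\<^sub>C (b *\<^sub>C x) = (a * b) *\<^sub>C x"
    and scaleC_one: "1 *\<^sub>C x = x"
    and scaleR_scaleC: "scaleR r x = of_real r *\<^sub>C x"
    and cinner_commute: "cinner x y = cnj (cinner y x)"
    and cinner_add_left: "cinner (x + y) z = cinner x z + cinner y z"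
    and cinner_scaleC_left: "cinner (a *\<^sub>C x) y = a * cinner x y"
    and cinner_pos: "Im (cinner x x) = 0 \<and> 0 \<le> Re (cinner x x)"
    and cinner_eq_zero_iff: "cinner x x = 0 \<longleftrightarrow> x = 0"
    and norm_eq_sqrt_cinner: "norm x = sqrt (Re (cinner x x))"

class chilbert_space = complex_inner + complete_space

definition cspan :: "'a::complex_inner set \<Rightarrow> 'a set" where
  "cspan S = {y. \<exists>T c. finite T \<and> T \<subseteq> S \<and> y = (\<Sum>x\<in>T. c x *\<^sub>C x)}"

definition csubspace :: "'a::complex_inner set \<Rightarrow> bool" where
  "csubspace V \<longleftrightarrow> 0 \<in> V \<and> (\<forall>x\<in>V. \<forall>y\<in>V. x + y \<in> V) \<and> (\<forall>c. \<forall>x\<in>V. c *\<^sub>C x \<in> V)"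

definition cfinite_dim :: "'a::complex_inner set \<Rightarrow> bool" where
  "cfinite_dim V \<longleftrightarrow> (\<exists>S. finite S \<and> cspan S = V)"

text \<open>Finite codimension: the quotient space by M is finite-dimensional, i.e.
  there is a finite set S with UNIV = M + span S.\<close>
definition finite_codim :: "'a::complex_inner set \<Rightarrow> bool" where
  "finite_codim M \<longleftrightarrow> (\<exists>S. finite S \<and> (\<forall>x. \<exists>m\<in>M. x - m \<in> cspan S))"

definition separable_space :: "'a::complex_inner itself \<Rightarrow> bool" where
  "separable_space _ \<longleftrightarrow> (\<exists>D::'a set. countable D \<and> closure D = UNIV)"

definition infinite_dim_space :: "'a::complex_inner itself \<Rightarrow> bool" where
  "infinite_dim_space _ \<longleftrightarrow> \<not> cfinite_dim (UNIV :: 'a set)"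

definition is_frame :: "(nat \<Rightarrow> 'a::complex_inner) \<Rightarrow> bool" where
  "is_frame f \<longleftrightarrow> (\<exists>A B. 0 < A \<and> A \<le> B \<and>
     (\<forall>x. summable (\<lambda>n. (cmod (cinner x (f n)))\<^sup>2) \<and>
          A * (norm x)\<^sup>2 \<le> (\<Sum>n. (cmod (cinner x (f n)))\<^sup>2) \<and>
          (\<Sum>n. (cmod (cinner x (f n)))\<^sup>2) \<le> B * (norm x)\<^sup>2))"

definition is_parseval_frame :: "(nat \<Rightarrow> 'a::complex_inner) \<Rightarrow> bool" where
  "is_parseval_frame h \<longleftrightarrow>
     (\<forall>x. summable (\<lambda>n. (cmod (cinner x (h n)))\<^sup>2) \<and>
          (\<Sum>n. (cmod (cinner x (h n)))\<^sup>2) = (norm x)\<^sup>2)"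

text \<open>The frame operator U*U, where U x = (cinner x (f n))_n is the analysis operator
  and U* c = sum_n c_n f_n is its adjoint; hence U*U x = sum_n cinner x (f n) f_n.\<close>
definition frame_op :: "(nat \<Rightarrow> 'a::complex_inner) \<Rightarrow> 'a \<Rightarrow> 'a" where
  "frame_op f x = (\<Sum>n. cinner x (f n) *\<^sub>C f n)"

end

theory Submission
  imports Defs
begin

subclass (in chilbert_space) banach ..


lemma scaleC_zero_left [simp]: "0 *\<^sub>C x = 0"
  using scaleC_add_left[of 0 0 x] by simp

lemma scaleC_zero_right [simp]: "a *\<^sub>C 0 = 0"
  using scaleC_add_right[of a 0 0] by simp

lemma scaleC_minus_left: "(- a) *\<^sub>C x = - (a *\<^sub>C x)"
  using scaleC_add_left[of a "-a" x] by (simp add: minus_unique)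

lemma scaleC_minus_right: "a *\<^sub>C (- x) = - (a *\<^sub>C x)"
  using scaleC_add_right[of a x "-x"] by (simp add: minus_unique)

lemma scaleC_diff_left: "(a - b) *\<^sub>C x = a *\<^sub>C x - b *\<^sub>C x"
  using scaleC_add_left[of a "-b" x] by (simp add: scaleC_minus_left)

lemma scaleC_diff_right: "a *\<^sub>C (x - y) = a *\<^sub>C x - a *\<^sub>C y"
  using scaleC_add_right[of a x "-y"] by (simp add: scaleC_minus_right)

lemma scaleC_sum_right: "a *\<^sub>C (\<Sum>i\<in>A. f i) = (\<Sum>i\<in>A. a *\<^sub>C f i)"
  by (induction A rule: infinite_finite_induct) (auto simp: scaleC_add_right)

lemma scaleC_sum_left: "(\<Sum>i\<in>A. f i) *\<^sub>C x = (\<Sum>i\<in>A. f i *\<^sub>C x)"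
  by (induction A rule: infinite_finite_induct) (auto simp: scaleC_add_left)

lemma cinner_zero_left [simp]: "cinner 0 y = 0"
  using cinner_add_left[of 0 0 y] by simp

lemma cinner_zero_right [simp]: "cinner x 0 = 0"
  using cinner_commute[of x 0] by simp

lemma cinner_add_right: "cinner x (y + z) = cinner x y + cinner x z"
  by (metis cinner_add_left cinner_commute complex_cnj_add)

lemma cinner_scaleC_right: "cinner x (a *\<^sub>C y) = cnj a * cinner x y"
  by (metis cinner_commute cinner_scaleC_left complex_cnj_mult)

lemma cinner_minus_left: "cinner (- x) y = - cinner x y"
  using cinner_add_left[of x "-x" y] by (simp add: minus_unique)

lemma cinner_minus_right: "cinner x (- y) = - cinner x y"
  using cinner_add_right[of x y "-y"] by (simp add: minus_unique)

lemma cinner_diff_left: "cinner (x - y) z = cinner x z - cinner y z"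
  using cinner_add_left[of x "-y" z] by (simp add: cinner_minus_left)

lemma cinner_diff_right: "cinner x (y - z) = cinner x y - cinner x z"
  using cinner_add_right[of x y "-z"] by (simp add: cinner_minus_right)

lemma cinner_sum_left: "cinner (\<Sum>i\<in>A. f i) y = (\<Sum>i\<in>A. cinner (f i) y)"
  by (induction A rule: infinite_finite_induct) (auto simp: cinner_add_left)

lemma cinner_sum_right: "cinner x (\<Sum>i\<in>A. f i) = (\<Sum>i\<in>A. cinner x (f i))"
  by (induction A rule: infinite_finite_induct) (auto simp: cinner_add_right)

lemma cinner_scaleR_left: "cinner (r *\<^sub>R x) y = of_real r * cinner x y"
  by (simp add: scaleR_scaleC cinner_scaleC_left)

lemma cinner_scaleR_right: "cinner x (r *\<^sub>R y) = of_real r * cinner x y"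
  by (simp add: scaleR_scaleC cinner_scaleC_right)

lemma cmod_sq: "(complex_of_real (cmod a))\<^sup>2 = a * cnj a"
  by (metis of_real_power complex_norm_square)

lemma cinner_self: "cinner x x = of_real ((norm x)\<^sup>2)"
proof -
  have "Im (cinner x x) = 0" "0 \<le> Re (cinner x x)" using cinner_pos by auto
  moreover have "(norm x)\<^sup>2 = Re (cinner x x)" using norm_eq_sqrt_cinner[of x] \<open>0 \<le> Re _\<close> by simp
  ultimately show ?thesis by (simp add: complex_eq_iff)
qed

lemma norm_scaleC: "norm (a *\<^sub>C x) = cmod a * norm x"
proof -
  have "of_real ((norm (a *\<^sub>C x))\<^sup>2) = (of_real ((cmod a * norm x)\<^sup>2) :: complex)"
    unfolding cinner_self[symmetric] cinner_scaleC_left cinner_scaleC_right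
    apply (simp add: cinner_self power_mult_distrib mult.assoc mult.left_commute)
    by (simp add: cmod_sq)
  then have "(norm (a *\<^sub>C x))\<^sup>2 = (cmod a * norm x)\<^sup>2" using of_real_eq_iff by blast
  then show ?thesis by (simp add: power2_eq_iff_nonneg)
qed

lemma scaleC_scaleR_commute: "a *\<^sub>C (r *\<^sub>R x) = r *\<^sub>R (a *\<^sub>C x)"
  by (simp add: scaleR_scaleC scaleC_scaleC mult.commute)

lemma Cauchy_Schwarz: "cmod (cinner x y) \<le> norm x * norm (y::'a::complex_inner)"
proof (cases "y = 0")
  case True then show ?thesis by simp
next
  case False
  define a where "a = cinner x y"
  define r where "r = (norm y)\<^sup>2"
  have r: "r > 0" using False by (simp add: r_def)
  define c where "c = a / of_real r"
  have "cinner (x - c *\<^sub>C y) (x - c *\<^sub>C y) = of_real ((norm x)\<^sup>2) - cnj c * a - c * cnj a + c * cnj c * of_real r"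
    by (simp add: cinner_diff_left cinner_diff_right cinner_scaleC_left cinner_scaleC_right cinner_self[of x] cinner_self[of y]
        a_def r_def algebra_simps cinner_commute[of y x])
  also have "\<dots> = of_real ((norm x)\<^sup>2 - (cmod a)\<^sup>2 / r)"
    using r apply (simp add: c_def field_simps algebra_simps)
    by (rule cmod_sq)
  finally have "0 \<le> (norm x)\<^sup>2 - (cmod a)\<^sup>2 / r"
    by (metis Re_complex_of_real cinner_pos)
  then have "(cmod a)\<^sup>2 \<le> (norm x)\<^sup>2 * (norm y)\<^sup>2" using r by (simp add: field_simps r_def)
  then have "(cmod a)\<^sup>2 \<le> (norm x * norm y)\<^sup>2" by (simp add: power_mult_distrib)
  then show ?thesis unfolding a_def by (simp add: power2_le_iff_abs_le)
qed

lemma cinner_eq_zero_iff' [simp]: "cinner x x = 0 \<longleftrightarrow> x = 0"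
  by (rule cinner_eq_zero_iff)

lemma bounded_linear_cinner_left: "bounded_linear (\<lambda>x. cinner x y)"
  by (rule bounded_linear_intro[where K="norm y"])
     (auto simp: cinner_add_left cinner_scaleR_left scaleR_conv_of_real Cauchy_Schwarz)

lemma bounded_linear_cinner_right: "bounded_linear (\<lambda>y. cinner x y)"
proof (rule bounded_linear_intro[where K="norm x"])
  fix z show "cmod (cinner x z) \<le> norm z * norm x" using Cauchy_Schwarz[of x z] by (simp add: mult.commute)
qed (auto simp: cinner_add_right cinner_scaleR_right scaleR_conv_of_real)

lemma bounded_linear_scaleC: "bounded_linear (\<lambda>x. a *\<^sub>C x)"
  by (rule bounded_linear_intro[where K="cmod a"])
     (auto simp: scaleC_add_right scaleC_scaleR_commute norm_scaleC mult.commute)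


lemma cspanI: "finite T \<Longrightarrow> T \<subseteq> S \<Longrightarrow> y = (\<Sum>t\<in>T. c t *\<^sub>C t) \<Longrightarrow> y \<in> cspan S"
  unfolding cspan_def by (intro CollectI exI[of _ T] exI[of _ c]) simp

lemma cspanE: assumes "y \<in> cspan S"
  obtains T c where "finite T" "T \<subseteq> S" "y = (\<Sum>t\<in>T. c t *\<^sub>C t)"
  using assms unfolding cspan_def by (auto simp del: )


lemma scaleC_minus_one: "(-1) *\<^sub>C x = - x"
  by (simp add: scaleC_minus_left scaleC_one)

lemma sum_if_restrict:
  assumes "finite A" "B \<subseteq> A"
  shows "(\<Sum>t\<in>A. (if t \<in> B then c t else 0) *\<^sub>C (t::'a::complex_inner)) = (\<Sum>t\<in>B. c t *\<^sub>C t)"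
proof -
  have "(\<Sum>t\<in>A. (if t \<in> B then c t else 0) *\<^sub>C t) = (\<Sum>t\<in>A. if t \<in> B then c t *\<^sub>C t else 0)"
    by (rule sum.cong) auto
  also have "\<dots> = (\<Sum>t\<in>A \<inter> B. c t *\<^sub>C t)" using assms(1) by (simp add: sum.inter_restrict)
  also have "A \<inter> B = B" using assms(2) by auto
  finally show ?thesis .
qed

lemma csubspace_cspan: "csubspace (cspan S)"
  unfolding csubspace_def
proof (intro conjI ballI allI)
  show "0 \<in> cspan S" by (rule cspanI[of "{}"]) auto
next
  fix x y assume "x \<in> cspan S" "y \<in> cspan S"
  then obtain T1 c1 T2 c2 where t: "finite T1" "T1 \<subseteq> S" "x = (\<Sum>t\<in>T1. c1 t *\<^sub>C t)"
      "finite T2" "T2 \<subseteq> S" "y = (\<Sum>t\<in>T2. c2 t *\<^sub>C t)" by (metis cspanE)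
  define c where "c t = (if t \<in> T1 then c1 t else 0) + (if t \<in> T2 then c2 t else 0)" for t
  have "(\<Sum>t\<in>T1\<union>T2. c t *\<^sub>C t) = (\<Sum>t\<in>T1\<union>T2. (if t \<in> T1 then c1 t else 0) *\<^sub>C t)
      + (\<Sum>t\<in>T1\<union>T2. (if t \<in> T2 then c2 t else 0) *\<^sub>C t)"
    unfolding c_def scaleC_add_left sum.distrib ..
  also have "\<dots> = x + y" using t by (simp add: sum_if_restrict)
  finally show "x + y \<in> cspan S" using t by (intro cspanI[of "T1 \<union> T2" _ _ c]) auto
next
  fix a x assume "x \<in> cspan S"
  then obtain T c where t: "finite T" "T \<subseteq> S" "x = (\<Sum>t\<in>T. c t *\<^sub>C t)" by (rule cspanE)
  then have "a *\<^sub>C x = (\<Sum>t\<in>T. (a * c t) *\<^sub>C t)" by (simp add: scaleC_sum_right scaleC_scaleC)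
  then show "a *\<^sub>C x \<in> cspan S" using t by (intro cspanI[of T _ _ "\<lambda>t. a * c t"]) auto
qed

lemma csubspace_0: "csubspace V \<Longrightarrow> 0 \<in> V" by (simp add: csubspace_def)
lemma csubspace_add: "csubspace V \<Longrightarrow> x \<in> V \<Longrightarrow> y \<in> V \<Longrightarrow> x + y \<in> V" by (simp add: csubspace_def)
lemma csubspace_scale: "csubspace V \<Longrightarrow> x \<in> V \<Longrightarrow> a *\<^sub>C x \<in> V" by (simp add: csubspace_def)
lemma csubspace_neg: "csubspace V \<Longrightarrow> x \<in> V \<Longrightarrow> - x \<in> V"
  using csubspace_scale[of V x "-1"] by (simp add: scaleC_minus_one)
lemma csubspace_diff: "csubspace V \<Longrightarrow> x \<in> V \<Longrightarrow> y \<in> V \<Longrightarrow> x - y \<in> V"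
  using csubspace_add[of V x "-y"] csubspace_neg[of V y] by simp
lemma csubspace_sum: "csubspace V \<Longrightarrow> (\<And>i. i \<in> A \<Longrightarrow> f i \<in> V) \<Longrightarrow> sum f A \<in> V"
  by (induction A rule: infinite_finite_induct) (auto simp: csubspace_0 csubspace_add)

lemma cspan_superset: "S \<subseteq> cspan S"
proof
  fix x assume "x \<in> S"
  then show "x \<in> cspan S" by (intro cspanI[of "{x}" _ _ "\<lambda>_. 1"]) (auto simp: scaleC_one)
qed

lemma cspan_minimal: assumes "csubspace V" "S \<subseteq> V" shows "cspan S \<subseteq> V"
proof
  fix y assume "y \<in> cspan S"
  then obtain T c where t: "finite T" "T \<subseteq> S" "y = (\<Sum>t\<in>T. c t *\<^sub>C t)" by (rule cspanE)
  show "y \<in> V" unfolding t(3) using t(2) assms by (intro csubspace_sum) (auto intro: csubspace_scale)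
qed

lemma cspan_mono: "S \<subseteq> T \<Longrightarrow> cspan S \<subseteq> cspan T"
  by (meson cspan_minimal cspan_superset csubspace_cspan order_trans)

lemma cspan_insert_decomp:
  assumes "y \<in> cspan (insert a F)"
  shows "\<exists>\<alpha> u. u \<in> cspan F \<and> y = \<alpha> *\<^sub>C a + u"
proof -
  obtain T c where t: "finite T" "T \<subseteq> insert a F" "y = (\<Sum>t\<in>T. c t *\<^sub>C t)"
    using assms by (rule cspanE)
  have u: "(\<Sum>t\<in>T - {a}. c t *\<^sub>C t) \<in> cspan F"
    using t by (intro cspanI[of "T - {a}" _ _ c]) auto
  show ?thesis
  proof (cases "a \<in> T")
    case True
    then have "y = c a *\<^sub>C a + (\<Sum>t\<in>T - {a}. c t *\<^sub>C t)" using t by (simp add: sum.remove)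
    then show ?thesis using u by blast
  next
    case False
    then have "y = 0 *\<^sub>C a + (\<Sum>t\<in>T - {a}. c t *\<^sub>C t)" using t by simp
    then show ?thesis using u by blast
  qed
qed

lemma subspace_finite_dim:
  assumes "finite F"
  shows "csubspace V \<Longrightarrow> V \<subseteq> cspan F \<Longrightarrow> cfinite_dim V"
  using assms
proof (induction F arbitrary: V rule: finite_induct)
  case empty
  have "cspan {} = {0}" using csubspace_0[OF csubspace_cspan, of "{}"] by (auto elim!: cspanE)
  then have "V = {0}" using empty(1,2) csubspace_0[of V] by blast
  then show ?case unfolding cfinite_dim_def using \<open>cspan {} = {0}\<close> by (intro exI[of _ "{}"]) auto
next
  case (insert a F)
  show ?case
  proof (cases "V \<subseteq> cspan F")
    case True
    then show ?thesis using insert.IH[OF insert.prems(1)] by blast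
  next
    case False
    then obtain v0 where v0: "v0 \<in> V" "v0 \<notin> cspan F" by auto
    obtain \<alpha> u0 where u0: "u0 \<in> cspan F" "v0 = \<alpha> *\<^sub>C a + u0"
      using cspan_insert_decomp[of v0 a F] v0 insert.prems by auto
    have \<alpha>: "\<alpha> \<noteq> 0" using u0 v0 by (metis add_0 scaleC_zero_left)
    have W: "csubspace (V \<inter> cspan F)" using insert.prems(1) csubspace_cspan[of F]
      unfolding csubspace_def by auto
    obtain S' where S': "finite S'" "cspan S' = V \<inter> cspan F"
      using insert.IH[OF W] unfolding cfinite_dim_def by auto
    have "cspan (insert v0 S') = V"
    proof
      show "cspan (insert v0 S') \<subseteq> V"
        using S' v0 insert.prems(1) cspan_superset[of S'] by (intro cspan_minimal) auto
    next
      show "V \<subseteq> cspan (insert v0 S')"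
      proof
        fix v assume v: "v \<in> V"
        obtain \<beta> u where u: "u \<in> cspan F" "v = \<beta> *\<^sub>C a + u"
          using cspan_insert_decomp[of v a F] v insert.prems by auto
        define w where "w = v - (\<beta> / \<alpha>) *\<^sub>C v0"
        have "w = u - (\<beta> / \<alpha>) *\<^sub>C u0"
          using \<alpha> unfolding w_def u u0 by (simp add: scaleC_add_right scaleC_scaleC algebra_simps)
        then have "w \<in> cspan F" using u u0 csubspace_cspan[of F]
          by (simp add: csubspace_diff csubspace_scale)
        moreover have "w \<in> V" unfolding w_def using v v0 insert.prems(1)
          by (simp add: csubspace_diff csubspace_scale)
        ultimately have "w \<in> cspan (insert v0 S')" using S' cspan_mono[of S' "insert v0 S'"] by auto
        moreover have "(\<beta> / \<alpha>) *\<^sub>C v0 \<in> cspan (insert v0 S')"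
          using cspan_superset[of "insert v0 S'"] csubspace_cspan by (auto intro: csubspace_scale)
        ultimately have "w + (\<beta> / \<alpha>) *\<^sub>C v0 \<in> cspan (insert v0 S')"
          using csubspace_cspan by (rule csubspace_add[rotated])
        then show "v \<in> cspan (insert v0 S')" unfolding w_def by simp
      qed
    qed
    then show ?thesis unfolding cfinite_dim_def using S' by blast
  qed
qed

lemma cfinite_dim_csubspace: "cfinite_dim V \<Longrightarrow> csubspace V"
  unfolding cfinite_dim_def using csubspace_cspan by auto


definition bessel :: "(nat \<Rightarrow> 'a::complex_inner) \<Rightarrow> real \<Rightarrow> bool" where
  "bessel f B \<longleftrightarrow> 0 \<le> B \<and> (\<forall>x. summable (\<lambda>n. (cmod (cinner x (f n)))\<^sup>2) \<and>
      (\<Sum>n. (cmod (cinner x (f n)))\<^sup>2) \<le> B * (norm x)\<^sup>2)"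

definition l2 :: "(nat \<Rightarrow> complex) \<Rightarrow> bool" where
  "l2 c \<longleftrightarrow> summable (\<lambda>n. (cmod (c n))\<^sup>2)"

lemma l2_bessel: "bessel f B \<Longrightarrow> l2 (\<lambda>n. cinner x (f n))"
  unfolding bessel_def l2_def by auto

lemma l2_cnj: "l2 c \<Longrightarrow> l2 (\<lambda>n. cnj (c n))"
  unfolding l2_def by simp

lemma l2_bessel': "bessel f B \<Longrightarrow> l2 (\<lambda>n. cinner (f n) x)"
  using l2_cnj[OF l2_bessel[of f B x]] by (simp add: cinner_commute[of x])

lemma l2_prod_norm: assumes "l2 a" "l2 b" shows "summable (\<lambda>n. norm (a n * b n))"
proof (rule summable_comparison_test[OF _ summable_add[OF assms[unfolded l2_def]]])
  show "\<exists>N. \<forall>n\<ge>N. norm (norm (a n * b n)) \<le> (cmod (a n))\<^sup>2 + (cmod (b n))\<^sup>2"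
  proof (intro exI allI impI)
    fix n
    have "cmod (a n) * cmod (b n) \<le> (cmod (a n))\<^sup>2 + (cmod (b n))\<^sup>2"
      using sum_squares_bound[of "cmod (a n)" "cmod (b n)"] mult_nonneg_nonneg[OF norm_ge_zero[of "a n"] norm_ge_zero[of "b n"]]
      by linarith
    then show "norm (norm (a n * b n)) \<le> (cmod (a n))\<^sup>2 + (cmod (b n))\<^sup>2"
      by (simp add: norm_mult)
  qed
qed

lemma l2_prod: "l2 a \<Longrightarrow> l2 b \<Longrightarrow> summable (\<lambda>n. a n * b n)"
  by (rule summable_norm_cancel[OF l2_prod_norm])

lemma l2_add: assumes "l2 a" "l2 b" shows "l2 (\<lambda>n. a n + b n)"
  unfolding l2_def
proof (rule summable_comparison_test[OF _ summable_add[OF summable_mult[OF assms(1)[unfolded l2_def], of 2]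
      summable_mult[OF assms(2)[unfolded l2_def], of 2]]])
  show "\<exists>N. \<forall>n\<ge>N. norm ((cmod (a n + b n))\<^sup>2) \<le> 2 * (cmod (a n))\<^sup>2 + 2 * (cmod (b n))\<^sup>2"
  proof (intro exI allI impI)
    fix n
    have "cmod (a n + b n) \<le> cmod (a n) + cmod (b n)" by (rule norm_triangle_ineq)
    then have "(cmod (a n + b n))\<^sup>2 \<le> (cmod (a n) + cmod (b n))\<^sup>2" by (simp add: power_mono)
    also have "\<dots> \<le> 2 * (cmod (a n))\<^sup>2 + 2 * (cmod (b n))\<^sup>2"
      using sum_squares_bound[of "cmod (a n)" "cmod (b n)"] power2_sum[of "cmod (a n)" "cmod (b n)"]
      by linarith
    finally show "norm ((cmod (a n + b n))\<^sup>2) \<le> 2 * (cmod (a n))\<^sup>2 + 2 * (cmod (b n))\<^sup>2" by simp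
  qed
qed

lemma l2_scale: "l2 a \<Longrightarrow> l2 (\<lambda>n. c * a n)"
  unfolding l2_def by (simp add: norm_mult power_mult_distrib summable_mult)

lemma l2_minus: "l2 a \<Longrightarrow> l2 (\<lambda>n. - a n)"
  unfolding l2_def by simp

lemma l2_diff: "l2 a \<Longrightarrow> l2 b \<Longrightarrow> l2 (\<lambda>n. a n - b n)"
  using l2_add[of a "\<lambda>n. - b n"] l2_minus[of b] by simp

lemma finite_CS:
  "norm (\<Sum>n\<in>A. a n * b n) \<le> sqrt (\<Sum>n\<in>A. (cmod (a n))\<^sup>2) * sqrt (\<Sum>n\<in>A. (cmod (b n))\<^sup>2)"
proof -
  have "norm (\<Sum>n\<in>A. a n * b n) \<le> (\<Sum>n\<in>A. norm (a n * b n))" by (rule norm_sum)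
  also have "\<dots> = (\<Sum>n\<in>A. \<bar>cmod (a n)\<bar> * \<bar>cmod (b n)\<bar>)" by (simp add: norm_mult)
  also have "\<dots> \<le> L2_set (\<lambda>n. cmod (a n)) A * L2_set (\<lambda>n. cmod (b n)) A" by (rule L2_set_mult_ineq)
  finally show ?thesis unfolding L2_set_def .
qed

lemma bessel_finite_bound:
  assumes "bessel f B"
  shows "norm (\<Sum>n\<in>A. c n *\<^sub>C f n) \<le> sqrt B * sqrt (\<Sum>n\<in>A. (cmod (c n))\<^sup>2)"
proof (cases "finite A")
  case False then show ?thesis using assms by (simp add: bessel_def)
next
  case fin: True
  define v where "v = (\<Sum>n\<in>A. c n *\<^sub>C f n)"
  have B: "0 \<le> B" using assms by (simp add: bessel_def)
  have "of_real ((norm v)\<^sup>2) = cinner v v" by (simp add: cinner_self)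
  also have "\<dots> = (\<Sum>n\<in>A. c n * cinner (f n) v)"
    by (subst (1) v_def) (simp add: cinner_sum_left cinner_scaleC_left)
  finally have "(norm v)\<^sup>2 = norm (\<Sum>n\<in>A. c n * cinner (f n) v)"
    by (metis norm_of_real abs_of_nonneg zero_le_power2)
  also have "\<dots> \<le> sqrt (\<Sum>n\<in>A. (cmod (c n))\<^sup>2) * sqrt (\<Sum>n\<in>A. (cmod (cinner (f n) v))\<^sup>2)"
    by (rule finite_CS)
  finally have 1: "(norm v)\<^sup>2 \<le> sqrt (\<Sum>n\<in>A. (cmod (c n))\<^sup>2) * sqrt (\<Sum>n\<in>A. (cmod (cinner (f n) v))\<^sup>2)" .
  have "(\<Sum>n\<in>A. (cmod (cinner (f n) v))\<^sup>2) = (\<Sum>n\<in>A. (cmod (cinner v (f n)))\<^sup>2)"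
    by (simp add: cinner_commute[of "f _" v])
  also have "\<dots> \<le> (\<Sum>n. (cmod (cinner v (f n)))\<^sup>2)"
    using assms fin by (intro sum_le_suminf) (auto simp: bessel_def)
  also have "\<dots> \<le> B * (norm v)\<^sup>2" using assms by (simp add: bessel_def)
  finally have 2: "(\<Sum>n\<in>A. (cmod (cinner (f n) v))\<^sup>2) \<le> B * (norm v)\<^sup>2" .
  have *: "(norm v)\<^sup>2 \<le> sqrt (\<Sum>n\<in>A. (cmod (c n))\<^sup>2) * sqrt (B * (norm v)\<^sup>2)"
  proof -
    have "sqrt (\<Sum>n\<in>A. (cmod (cinner (f n) v))\<^sup>2) \<le> sqrt (B * (norm v)\<^sup>2)"
      using 2 by (rule real_sqrt_le_mono)
    then have "sqrt (\<Sum>n\<in>A. (cmod (c n))\<^sup>2) * sqrt (\<Sum>n\<in>A. (cmod (cinner (f n) v))\<^sup>2)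
        \<le> sqrt (\<Sum>n\<in>A. (cmod (c n))\<^sup>2) * sqrt (B * (norm v)\<^sup>2)"
      by (rule mult_left_mono) (simp add: sum_nonneg)
    then show ?thesis using 1 by linarith
  qed
  show ?thesis
  proof (cases "v = 0")
    case True then show ?thesis using B unfolding v_def[symmetric] by (simp add: sum_nonneg)
  next
    case False
    define s where "s = sqrt (\<Sum>n\<in>A. (cmod (c n))\<^sup>2)"
    have q: "sqrt (B * (norm v)\<^sup>2) = sqrt B * norm v" by (simp add: real_sqrt_mult)
    have **: "(norm v)\<^sup>2 \<le> s * (sqrt B * norm v)" using * unfolding q s_def[symmetric] .
    have "norm v * norm v \<le> (s * sqrt B) * norm v"
      using ** by (simp add: power2_eq_square mult.assoc)
    then have "norm v \<le> s * sqrt B" using False by simp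
    then show ?thesis unfolding v_def s_def by (simp only: mult.commute)
  qed
qed

lemma bessel_summable:
  assumes "bessel (f::nat \<Rightarrow> 'a::chilbert_space) B" "l2 c"
  shows "summable (\<lambda>n. c n *\<^sub>C f n)"
  unfolding summable_Cauchy
proof (intro allI impI)
  fix e :: real assume e: "e > 0"
  have B: "0 \<le> B" using assms by (simp add: bessel_def)
  have pos: "sqrt B + 1 > 0" using B by (simp add: add_nonneg_pos)
  define e' where "e' = (e / (sqrt B + 1))\<^sup>2"
  have e': "e' > 0" using e pos by (simp add: e'_def)
  have "\<forall>e>0. \<exists>N. \<forall>m\<ge>N. \<forall>n. norm (\<Sum>k\<in>{m..<n}. (cmod (c k))\<^sup>2) < e"
    using assms(2) unfolding l2_def summable_Cauchy .
  from this[rule_format, OF e'] obtain N where N: "\<forall>m\<ge>N. \<forall>n. norm (\<Sum>k\<in>{m..<n}. (cmod (c k))\<^sup>2) < e'"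
    by blast
  show "\<exists>N. \<forall>m\<ge>N. \<forall>n. norm (\<Sum>k\<in>{m..<n}. c k *\<^sub>C f k) < e"
  proof (intro exI allI impI)
    fix m n assume m: "m \<ge> N"
    have s0: "0 \<le> (\<Sum>k\<in>{m..<n}. (cmod (c k))\<^sup>2)" by (simp add: sum_nonneg)
    have lt: "(\<Sum>k\<in>{m..<n}. (cmod (c k))\<^sup>2) < e'" using N[rule_format, OF m, of n] s0 by simp
    then have s: "sqrt (\<Sum>k\<in>{m..<n}. (cmod (c k))\<^sup>2) < e / (sqrt B + 1)"
    proof -
      have "sqrt (\<Sum>k\<in>{m..<n}. (cmod (c k))\<^sup>2) < sqrt e'" using lt by (rule real_sqrt_less_mono)
      also have "sqrt e' = e / (sqrt B + 1)" unfolding e'_def using e pos by simp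
      finally show ?thesis .
    qed
    have "norm (\<Sum>k\<in>{m..<n}. c k *\<^sub>C f k) \<le> sqrt B * sqrt (\<Sum>k\<in>{m..<n}. (cmod (c k))\<^sup>2)"
      by (rule bessel_finite_bound[OF assms(1)])
    also have "\<dots> \<le> sqrt B * (e / (sqrt B + 1))" using s B by (intro mult_left_mono) auto
    also have "\<dots> < e" using e pos by (simp add: field_simps)
    finally show "norm (\<Sum>k\<in>{m..<n}. c k *\<^sub>C f k) < e" .
  qed
qed

lemma bessel_cinner_sums:
  assumes "bessel (f::nat \<Rightarrow> 'a::chilbert_space) B" "l2 c"
  shows "(\<lambda>n. c n * cinner (f n) y) sums cinner (\<Sum>n. c n *\<^sub>C f n) y"
proof -
  have "(\<lambda>n. c n *\<^sub>C f n) sums (\<Sum>n. c n *\<^sub>C f n)" using bessel_summable[OF assms] by (rule summable_sums)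
  from bounded_linear.sums[OF bounded_linear_cinner_left this, of y]
  show ?thesis by (simp add: cinner_scaleC_left)
qed

lemma bessel_norm_bound:
  assumes "bessel (f::nat \<Rightarrow> 'a::chilbert_space) B" "l2 c"
  shows "norm (\<Sum>n. c n *\<^sub>C f n) \<le> sqrt B * sqrt (\<Sum>n. (cmod (c n))\<^sup>2)"
proof (rule LIMSEQ_le_const2)
  show "(\<lambda>N. norm (\<Sum>n<N. c n *\<^sub>C f n)) \<longlonglongrightarrow> norm (\<Sum>n. c n *\<^sub>C f n)"
    by (intro tendsto_norm summable_LIMSEQ bessel_summable[OF assms])
  have B: "0 \<le> B" using assms by (simp add: bessel_def)
  show "\<exists>N. \<forall>N'\<ge>N. norm (\<Sum>n<N'. c n *\<^sub>C f n) \<le> sqrt B * sqrt (\<Sum>n. (cmod (c n))\<^sup>2)"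
  proof (intro exI allI impI)
    fix N :: nat
    have "norm (\<Sum>n<N. c n *\<^sub>C f n) \<le> sqrt B * sqrt (\<Sum>n<N. (cmod (c n))\<^sup>2)"
      by (rule bessel_finite_bound[OF assms(1)])
    also have "\<dots> \<le> sqrt B * sqrt (\<Sum>n. (cmod (c n))\<^sup>2)"
      using assms(2) B by (intro mult_left_mono real_sqrt_le_mono sum_le_suminf) (auto simp: l2_def)
    finally show "norm (\<Sum>n<N. c n *\<^sub>C f n) \<le> sqrt B * sqrt (\<Sum>n. (cmod (c n))\<^sup>2)" .
  qed
qed


lemma fo_sums: assumes "bessel (f::nat \<Rightarrow> 'a::chilbert_space) B"
  shows "(\<lambda>n. cinner x (f n) *\<^sub>C f n) sums frame_op f x"
  unfolding frame_op_def by (rule summable_sums[OF bessel_summable[OF assms l2_bessel[OF assms]]])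

lemma fo_cinner: assumes "bessel (f::nat \<Rightarrow> 'a::chilbert_space) B"
  shows "(\<lambda>n. cinner x (f n) * cinner (f n) y) sums cinner (frame_op f x) y"
  unfolding frame_op_def by (rule bessel_cinner_sums[OF assms l2_bessel[OF assms]])

lemma fo_add: assumes "bessel (f::nat \<Rightarrow> 'a::chilbert_space) B"
  shows "frame_op f (x + y) = frame_op f x + frame_op f y"
proof -
  have "(\<lambda>n. cinner x (f n) *\<^sub>C f n + cinner y (f n) *\<^sub>C f n) sums (frame_op f x + frame_op f y)"
    by (rule sums_add[OF fo_sums[OF assms] fo_sums[OF assms]])
  moreover have "(\<lambda>n. cinner (x + y) (f n) *\<^sub>C f n) sums frame_op f (x + y)" by (rule fo_sums[OF assms])
  ultimately show ?thesis by (simp add: cinner_add_left scaleC_add_left sums_unique2)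
qed

lemma fo_scale: assumes "bessel (f::nat \<Rightarrow> 'a::chilbert_space) B"
  shows "frame_op f (a *\<^sub>C x) = a *\<^sub>C frame_op f x"
proof -
  have "(\<lambda>n. a *\<^sub>C (cinner x (f n) *\<^sub>C f n)) sums (a *\<^sub>C frame_op f x)"
    by (rule bounded_linear.sums[OF bounded_linear_scaleC fo_sums[OF assms]])
  moreover have "(\<lambda>n. cinner (a *\<^sub>C x) (f n) *\<^sub>C f n) sums frame_op f (a *\<^sub>C x)" by (rule fo_sums[OF assms])
  ultimately show ?thesis by (simp add: cinner_scaleC_left scaleC_scaleC sums_unique2)
qed

lemma fo_diff: assumes "bessel (f::nat \<Rightarrow> 'a::chilbert_space) B"
  shows "frame_op f (x - y) = frame_op f x - frame_op f y"
  using fo_add[OF assms, of "x - y" y] by simp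

lemma fo_zero: assumes "bessel (f::nat \<Rightarrow> 'a::chilbert_space) B"
  shows "frame_op f 0 = 0"
  using fo_diff[OF assms, of 0 0] by simp

lemma fo_sum: assumes "bessel (f::nat \<Rightarrow> 'a::chilbert_space) B"
  shows "frame_op f (\<Sum>i\<in>I. g i) = (\<Sum>i\<in>I. frame_op f (g i))"
  by (induction I rule: infinite_finite_induct) (auto simp: fo_zero[OF assms] fo_add[OF assms])

lemma fo_norm: assumes "bessel (f::nat \<Rightarrow> 'a::chilbert_space) B"
  shows "norm (frame_op f x) \<le> norm x * B"
proof -
  have B: "0 \<le> B" using assms by (simp add: bessel_def)
  have "norm (frame_op f x) \<le> sqrt B * sqrt (\<Sum>n. (cmod (cinner x (f n)))\<^sup>2)"
    unfolding frame_op_def by (rule bessel_norm_bound[OF assms l2_bessel[OF assms]])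
  also have "\<dots> \<le> sqrt B * sqrt (B * (norm x)\<^sup>2)"
    using assms B by (intro mult_left_mono real_sqrt_le_mono) (auto simp: bessel_def)
  also have "\<dots> = norm x * B" using B by (simp add: real_sqrt_mult)
  finally show ?thesis .
qed

lemma fo_bounded_linear: assumes "bessel (f::nat \<Rightarrow> 'a::chilbert_space) B"
  shows "bounded_linear (frame_op f)"
  by (rule bounded_linear_intro[where K=B]) (auto simp: fo_add[OF assms] fo_norm[OF assms] scaleR_scaleC fo_scale[OF assms])

lemma sums_cnj': "f sums l \<Longrightarrow> (\<lambda>n. cnj (f n)) sums cnj l"
  by (simp add: sums_cnj)

lemma fo_selfadj: assumes "bessel (f::nat \<Rightarrow> 'a::chilbert_space) B"
  shows "cinner (frame_op f x) y = cinner x (frame_op f y)"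
proof -
  have "(\<lambda>n. cnj (cinner y (f n) * cinner (f n) x)) sums cnj (cinner (frame_op f y) x)"
    by (rule sums_cnj'[OF fo_cinner[OF assms]])
  then have "(\<lambda>n. cinner x (f n) * cinner (f n) y) sums cinner x (frame_op f y)"
    by (simp add: cinner_commute[of _ y] cinner_commute[of x] mult.commute)
  then show ?thesis using fo_cinner[OF assms, of x y] by (simp add: sums_unique2)
qed

lemma fo_quad: assumes "bessel (f::nat \<Rightarrow> 'a::chilbert_space) B"
  shows "cinner (frame_op f x) x = of_real (\<Sum>n. (cmod (cinner x (f n)))\<^sup>2)"
proof -
  have s: "(\<lambda>n. (cmod (cinner x (f n)))\<^sup>2) sums (\<Sum>n. (cmod (cinner x (f n)))\<^sup>2)"
    using assms by (intro summable_sums) (simp add: bessel_def)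
  have "(\<lambda>n. of_real ((cmod (cinner x (f n)))\<^sup>2) :: complex) sums of_real (\<Sum>n. (cmod (cinner x (f n)))\<^sup>2)"
    by (rule sums_of_real[OF s])
  moreover have "\<And>n. (of_real ((cmod (cinner x (f n)))\<^sup>2) :: complex) = cinner x (f n) * cinner (f n) x"
    by (simp add: cinner_commute[of "f _" x] cmod_sq)
  ultimately have "(\<lambda>n. cinner x (f n) * cinner (f n) x) sums of_real (\<Sum>n. (cmod (cinner x (f n)))\<^sup>2)"
    by simp
  then show ?thesis using fo_cinner[OF assms, of x x] by (simp add: sums_unique2)
qed

lemma polarization_zero:
  fixes T :: "'a::complex_inner \<Rightarrow> 'a"
  assumes add: "\<And>x y. T (x + y) = T x + T y" and sc: "\<And>a x. T (a *\<^sub>C x) = a *\<^sub>C T x"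
    and z: "\<And>x. cinner (T x) x = 0"
  shows "T x = 0"
proof -
  have key: "cinner (T x) y + cinner (T y) x = 0" for x y
    using z[of "x + y"] z[of x] z[of y] by (simp add: add cinner_add_left cinner_add_right add.commute)
  have a: "cinner (T x) (T x) = 0"
  proof -
    define y where "y = T x"
    have 1: "cinner (T x) y + cinner (T y) x = 0" by (rule key)
    have 2: "cinner (T x) (\<i> *\<^sub>C y) + cinner (T (\<i> *\<^sub>C y)) x = 0" by (rule key)
    then have "- \<i> * cinner (T x) y + \<i> * cinner (T y) x = 0"
      by (simp add: sc cinner_scaleC_left cinner_scaleC_right)
    then have "cinner (T x) y = cinner (T y) x" by (simp add: algebra_simps)
    with 1 show ?thesis unfolding y_def by simp
  qed
  then show ?thesis by simp
qed

lemma parseval_bessel: "is_parseval_frame h \<Longrightarrow> bessel h 1"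
  unfolding is_parseval_frame_def bessel_def by simp

lemma parseval_recon: assumes "is_parseval_frame (h::nat \<Rightarrow> 'a::chilbert_space)"
  shows "frame_op h x = x"
proof -
  note b = parseval_bessel[OF assms]
  have "x - frame_op h x = 0"
  proof (rule polarization_zero[where T="\<lambda>x. x - frame_op h x"])
    show "x + y - frame_op h (x + y) = x - frame_op h x + (y - frame_op h y)" for x y
      by (simp add: fo_add[OF b])
    show "a *\<^sub>C x - frame_op h (a *\<^sub>C x) = a *\<^sub>C (x - frame_op h x)" for a x
      by (simp add: fo_scale[OF b] scaleC_diff_right)
    show "cinner (x - frame_op h x) x = 0" for x
      using assms by (simp add: cinner_diff_left fo_quad[OF b] cinner_self is_parseval_frame_def)
  qed
  then show ?thesis by simp
qed

lemma frame_bessel: assumes "is_frame f"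
  obtains A B where "0 < A" "bessel f B" "\<And>x. A * (norm x)\<^sup>2 \<le> (\<Sum>n. (cmod (cinner x (f n)))\<^sup>2)"
proof -
  obtain A B where "0 < A" "A \<le> B" and h: "\<forall>x. summable (\<lambda>n. (cmod (cinner x (f n)))\<^sup>2) \<and>
          A * (norm x)\<^sup>2 \<le> (\<Sum>n. (cmod (cinner x (f n)))\<^sup>2) \<and>
          (\<Sum>n. (cmod (cinner x (f n)))\<^sup>2) \<le> B * (norm x)\<^sup>2"
    using assms unfolding is_frame_def by blast
  moreover have "bessel f B" unfolding bessel_def using h \<open>0 < A\<close> \<open>A \<le> B\<close> by auto
  ultimately show ?thesis using that by blast
qed


locale herm =
  fixes \<phi> :: "'a::complex_inner \<Rightarrow> 'a \<Rightarrow> complex"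
  assumes add_left: "\<phi> (x + y) z = \<phi> x z + \<phi> y z"
    and scale_left: "\<phi> (a *\<^sub>C x) y = a * \<phi> x y"
    and commute: "\<phi> x y = cnj (\<phi> y x)"
    and pos: "0 \<le> Re (\<phi> x x)"
    and definite: "\<phi> x x = 0 \<Longrightarrow> x = 0"
begin

lemma add_right: "\<phi> x (y + z) = \<phi> x y + \<phi> x z"
  by (metis add_left commute complex_cnj_add)
lemma scale_right: "\<phi> x (a *\<^sub>C y) = cnj a * \<phi> x y"
  by (metis scale_left commute complex_cnj_mult)
lemma zero_left [simp]: "\<phi> 0 y = 0"
  using add_left[of 0 0 y] by simp
lemma zero_right [simp]: "\<phi> x 0 = 0"
  using commute[of x 0] by simp
lemma sum_left: "\<phi> (\<Sum>i\<in>I. g i) y = (\<Sum>i\<in>I. \<phi> (g i) y)"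
  by (induction I rule: infinite_finite_induct) (auto simp: add_left)
lemma sum_right: "\<phi> x (\<Sum>i\<in>I. g i) = (\<Sum>i\<in>I. \<phi> x (g i))"
  by (induction I rule: infinite_finite_induct) (auto simp: add_right)
lemma diff_left: "\<phi> (x - y) z = \<phi> x z - \<phi> y z"
  using add_left[of "x - y" y z] by simp
lemma self_real: "\<phi> x x = of_real (Re (\<phi> x x))"
  using commute[of x x] by (simp add: complex_eq_iff)

lemma cspan_orth: assumes "v \<in> cspan A" "\<And>a. a \<in> A \<Longrightarrow> \<phi> a w = 0" shows "\<phi> v w = 0"
proof -
  obtain T c where t: "finite T" "T \<subseteq> A" "v = (\<Sum>t\<in>T. c t *\<^sub>C t)" using assms(1) by (rule cspanE)
  show ?thesis unfolding t(3) sum_left scale_left using t(2) assms(2) by (auto intro!: sum.neutral)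
qed

definition gsP :: "nat \<Rightarrow> (nat \<Rightarrow> 'a) \<Rightarrow> (nat \<Rightarrow> 'a) \<Rightarrow> bool" where
  "gsP n x y \<longleftrightarrow> (\<forall>i<n. \<forall>j<n. \<phi> (y i) (y j) = (if i = j \<and> y i \<noteq> 0 then 1 else 0))
           \<and> (\<forall>i<n. y i \<in> cspan (x ` {..<Suc i}))
           \<and> (\<forall>i<n. x i \<in> cspan (y ` {..<Suc i}))
           \<and> (\<forall>i<n. x i \<notin> cspan (x ` {..<i}) \<longrightarrow> y i \<noteq> 0)"

lemma gs_exists: "\<exists>y. gsP n x y"
proof (induction n)
  case 0
  show ?case by (auto simp: gsP_def)
next
  case (Suc n)
  then obtain y where "gsP n x y" by blast
  note G = this[unfolded gsP_def]
  note orth = conjunct1[OF G]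
  note sp1 = conjunct1[OF conjunct2[OF G]]
  note sp2 = conjunct1[OF conjunct2[OF conjunct2[OF G]]]
  note nz = conjunct2[OF conjunct2[OF conjunct2[OF G]]]
  define z where "z = x n - (\<Sum>j<n. \<phi> (x n) (y j) *\<^sub>C y j)"
  define s where "s = sqrt (Re (\<phi> z z))"
  define y' where "y' = y(n := (if z = 0 then 0 else (1 / s) *\<^sub>C z))"
  have y'_lt: "y' i = y i" if "i < n" for i using that by (simp add: y'_def)
  have zorth: "\<phi> z (y j) = 0" if "j < n" for j
  proof -
    have "\<phi> z (y j) = \<phi> (x n) (y j) - (\<Sum>k<n. \<phi> (x n) (y k) * \<phi> (y k) (y j))"
      unfolding z_def diff_left sum_left scale_left ..
    also have "(\<Sum>k<n. \<phi> (x n) (y k) * \<phi> (y k) (y j)) = (\<Sum>k<n. if k = j then (if y j \<noteq> 0 then \<phi> (x n) (y j) else 0) else 0)"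
      using orth that by (intro sum.cong) auto
    also have "\<dots> = (if y j \<noteq> 0 then \<phi> (x n) (y j) else 0)" using that by simp
    finally show ?thesis by auto
  qed
  have s_pos: "s > 0" if "z \<noteq> 0"
  proof -
    have "Re (\<phi> z z) \<noteq> 0" using self_real[of z] definite[of z] that by auto
    then show ?thesis using pos[of z] unfolding s_def by simp
  qed
  have y'n_orth: "\<phi> (y' n) (y j) = 0" if "j < n" for j
    using zorth[OF that] by (simp add: y'_def scale_left)
  have y'n_self: "\<phi> (y' n) (y' n) = (if y' n \<noteq> 0 then 1 else 0)"
  proof (cases "z = 0")
    case True then show ?thesis by (simp add: y'_def)
  next
    case False
    have "norm ((1 / s) *\<^sub>C z) \<noteq> 0" using False s_pos[OF False] by (simp add: norm_scaleC)
    then have ne: "(1 / s) *\<^sub>C z \<noteq> 0" by auto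
    have "\<phi> ((1 / s) *\<^sub>C z) ((1 / s) *\<^sub>C z) = of_real (1 / s) * of_real (1 / s) * \<phi> z z"
      by (simp add: scale_left scale_right)
    also have "\<phi> z z = of_real (s * s)"
      using self_real[of z] pos[of z] unfolding s_def by simp
    also have "(of_real (1 / s) * of_real (1 / s) * of_real (s * s) :: complex) = 1"
      using s_pos[OF False] by (simp add: field_simps)
    finally show ?thesis using ne False by (simp add: y'_def)
  qed
  have spx: "cspan (x ` {..<Suc j}) \<subseteq> cspan (x ` {..<m})" if "j < m" for j m
    using that by (intro cspan_mono image_mono) auto
  have sum_in: "(\<Sum>j<n. \<phi> (x n) (y j) *\<^sub>C y j) \<in> cspan (x ` {..<n})"
    using sp1 spx by (intro csubspace_sum[OF csubspace_cspan] csubspace_scale[OF csubspace_cspan]) blast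
  show ?case
  proof (unfold gsP_def, intro exI[of _ y'] conjI allI impI)
    fix i j assume i: "i < Suc n" and j: "j < Suc n"
    show "\<phi> (y' i) (y' j) = (if i = j \<and> y' i \<noteq> 0 then 1 else 0)"
    proof (cases "i = n")
      case True
      show ?thesis
      proof (cases "j = n")
        case True then show ?thesis using \<open>i = n\<close> y'n_self by simp
      next
        case False then have "j < n" using j by simp
        then show ?thesis using \<open>i = n\<close> y'n_orth y'_lt by auto
      qed
    next
      case False then have "i < n" using i by simp
      show ?thesis
      proof (cases "j = n")
        case True
        have "\<phi> (y' i) (y' n) = cnj (\<phi> (y' n) (y i))" unfolding y'_lt[OF \<open>i < n\<close>] by (rule commute)
        then show ?thesis using True y'n_orth[OF \<open>i < n\<close>] \<open>i < n\<close> by simp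
      next
        case False then have "j < n" using j by simp
        then show ?thesis using orth \<open>i < n\<close> y'_lt by simp
      qed
    qed
  next
    fix i assume i: "i < Suc n"
    show "y' i \<in> cspan (x ` {..<Suc i})"
    proof (cases "i = n")
      case False then show ?thesis using i sp1 y'_lt by simp
    next
      case True
      have "x n \<in> cspan (x ` {..<Suc n})" by (rule subsetD[OF cspan_superset]) simp
      moreover have "x ` {..<n} \<subseteq> x ` {..<Suc n}" by (rule image_mono) auto
      then have "(\<Sum>j<n. \<phi> (x n) (y j) *\<^sub>C y j) \<in> cspan (x ` {..<Suc n})"
        using sum_in by (rule subsetD[OF cspan_mono])
      ultimately have "z \<in> cspan (x ` {..<Suc n})" unfolding z_def by (rule csubspace_diff[OF csubspace_cspan])
      then show ?thesis using True by (simp add: y'_def csubspace_scale[OF csubspace_cspan] csubspace_0[OF csubspace_cspan])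
    qed
  next
    fix i assume i: "i < Suc n"
    show "x i \<in> cspan (y' ` {..<Suc i})"
    proof (cases "i = n")
      case False
      then have "i < n" using i by simp
      then have "y' ` {..<Suc i} = y ` {..<Suc i}" using y'_lt by auto
      then show ?thesis using sp2 \<open>i < n\<close> by simp
    next
      case True
      have sub: "csubspace (cspan (y' ` {..<Suc n}))" by (rule csubspace_cspan)
      have yj: "y j \<in> cspan (y' ` {..<Suc n})" if "j < n" for j
        using that y'_lt[OF that] cspan_superset[of "y' ` {..<Suc n}"] by (metis image_eqI lessThan_iff less_SucI subsetD)
      have S: "(\<Sum>j<n. \<phi> (x n) (y j) *\<^sub>C y j) \<in> cspan (y' ` {..<Suc n})"
        using yj by (intro csubspace_sum[OF sub] csubspace_scale[OF sub]) auto
      have Z: "z \<in> cspan (y' ` {..<Suc n})"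
      proof (cases "z = 0")
        case True then show ?thesis by (simp add: csubspace_0[OF sub])
      next
        case False
        have "y' n \<in> cspan (y' ` {..<Suc n})" by (rule subsetD[OF cspan_superset]) simp
        then have "of_real s *\<^sub>C y' n \<in> cspan (y' ` {..<Suc n})" by (rule csubspace_scale[OF sub])
        moreover have "of_real s *\<^sub>C y' n = z" using False s_pos[OF False]
          by (simp add: y'_def scaleC_scaleC scaleC_one)
        ultimately show ?thesis by simp
      qed
      have "x n = z + (\<Sum>j<n. \<phi> (x n) (y j) *\<^sub>C y j)" unfolding z_def by simp
      then show ?thesis using True csubspace_add[OF sub Z S] by simp
    qed
  next
    fix i assume i: "i < Suc n" and ni: "x i \<notin> cspan (x ` {..<i})"
    show "y' i \<noteq> 0"
    proof (cases "i = n")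
      case False then show ?thesis using i nz ni y'_lt by simp
    next
      case True
      show ?thesis
      proof (cases "z = 0")
        case False
        have "norm ((1 / s) *\<^sub>C z) \<noteq> 0" using False s_pos[OF False] by (simp add: norm_scaleC)
        then show ?thesis using True False by (auto simp: y'_def)
      next
        case z0: True
        then have "x n = (\<Sum>j<n. \<phi> (x n) (y j) *\<^sub>C y j)" unfolding z_def by simp
        then have "x n \<in> cspan (x ` {..<n})" using sum_in by simp
        then show ?thesis using ni True by simp
      qed
    qed
  qed
qed

end


context herm begin

definition ON :: "(nat \<Rightarrow> 'a) \<Rightarrow> nat \<Rightarrow> bool" where
  "ON w N \<longleftrightarrow> (\<forall>i<N. \<forall>j<N. \<phi> (w i) (w j) = (if i = j \<and> w i \<noteq> 0 then 1 else 0))"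

lemma gsP_ON: "gsP N x y \<Longrightarrow> ON y N"
  unfolding gsP_def ON_def by simp

lemma cspan_orth_right: assumes "v \<in> cspan A" "\<And>a. a \<in> A \<Longrightarrow> \<phi> w a = 0" shows "\<phi> w v = 0"
proof -
  have "\<phi> v w = 0" using assms(1)
  proof (rule cspan_orth)
    fix a assume "a \<in> A" then show "\<phi> a w = 0" using assms(2)[of a] commute[of a w] by simp
  qed
  then show ?thesis using commute[of w v] by simp
qed

lemma ON_sum:
  assumes "ON w N" "\<And>i. i < N \<Longrightarrow> w i = 0 \<Longrightarrow> c i = 0"
  shows "\<phi> (\<Sum>i<N. c i *\<^sub>C w i) (\<Sum>j<N. d j *\<^sub>C w j) = (\<Sum>i<N. c i * cnj (d i))"
proof -
  have "\<phi> (\<Sum>i<N. c i *\<^sub>C w i) (\<Sum>j<N. d j *\<^sub>C w j) = (\<Sum>i<N. \<Sum>j<N. c i * cnj (d j) * \<phi> (w i) (w j))"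
    apply (simp add: sum_left sum_right scale_left scale_right sum_distrib_left mult.assoc)
    apply (subst sum.swap)
    by (simp add: mult_ac)
  also have "\<dots> = (\<Sum>i<N. \<Sum>j<N. if j = i then c i * cnj (d i) else 0)"
  proof (intro sum.cong refl)
    fix i j assume i: "i \<in> {..<N}" and j: "j \<in> {..<N}"
    show "c i * cnj (d j) * \<phi> (w i) (w j) = (if j = i then c i * cnj (d i) else 0)"
      using assms i j unfolding ON_def by auto
  qed
  also have "\<dots> = (\<Sum>i<N. c i * cnj (d i))" by simp
  finally show ?thesis .
qed

end

lemma herm_cinner: "herm (cinner :: 'a::complex_inner \<Rightarrow> 'a \<Rightarrow> complex)"
  by (unfold_locales) (auto simp: cinner_add_left cinner_scaleC_left cinner_pos intro: cinner_commute)

interpretation ci: herm "cinner :: 'a::complex_inner \<Rightarrow> 'a \<Rightarrow> complex"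
  by (rule herm_cinner)

lemma finite_enum: assumes "finite R" obtains x :: "nat \<Rightarrow> 'a" and n where "x ` {..<n} = R"
proof -
  obtain xs where "set xs = R" using finite_list[OF assms] by blast
  then have "(\<lambda>i. xs ! i) ` {..<length xs} = R" by (auto simp: set_conv_nth)
  then show ?thesis by (rule that)
qed

lemma proj_orth:
  assumes "ci.ON e N" "j < N"
  shows "cinner (x - (\<Sum>i<N. cinner x (e i) *\<^sub>C e i)) (e j) = 0"
proof -
  have "cinner (\<Sum>i<N. cinner x (e i) *\<^sub>C e i) (e j) = (\<Sum>i<N. if i = j then (if e j \<noteq> 0 then cinner x (e j) else 0) else 0)"
    unfolding cinner_sum_left cinner_scaleC_left
  proof (intro sum.cong refl)
    fix i assume "i \<in> {..<N}"
    then show "cinner x (e i) * cinner (e i) (e j) = (if i = j then (if e j \<noteq> 0 then cinner x (e j) else 0) else 0)"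
      using assms unfolding ci.ON_def by auto
  qed
  also have "\<dots> = (if e j \<noteq> 0 then cinner x (e j) else 0)" using assms(2) by simp
  finally show ?thesis by (auto simp: cinner_diff_left)
qed

lemma proj_in: "(\<Sum>i<N. c i *\<^sub>C e i) \<in> cspan (e ` {..<N})"
  by (intro csubspace_sum[OF csubspace_cspan] csubspace_scale[OF csubspace_cspan]
      subsetD[OF cspan_superset]) auto

lemma cspan_expand:
  assumes "ci.ON e N" "v \<in> cspan (e ` {..<N})"
  shows "v = (\<Sum>i<N. cinner v (e i) *\<^sub>C e i)"
proof -
  define w where "w = v - (\<Sum>i<N. cinner v (e i) *\<^sub>C e i)"
  have "w \<in> cspan (e ` {..<N})" unfolding w_def using assms(2) proj_in
    by (rule csubspace_diff[OF csubspace_cspan])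
  moreover have "\<And>a. a \<in> e ` {..<N} \<Longrightarrow> cinner w a = 0" using proj_orth[OF assms(1)] unfolding w_def by auto
  ultimately have "cinner w w = 0" by (rule ci.cspan_orth_right)
  then show ?thesis unfolding w_def by simp
qed


lemma T_add: "bessel (f::nat \<Rightarrow> 'a::chilbert_space) B \<Longrightarrow>
  (x + y) - frame_op f (x + y) = (x - frame_op f x) + (y - frame_op f y)"
  by (simp add: fo_add)

lemma T_scale: "bessel (f::nat \<Rightarrow> 'a::chilbert_space) B \<Longrightarrow>
  a *\<^sub>C x - frame_op f (a *\<^sub>C x) = a *\<^sub>C (x - frame_op f x)"
  by (simp add: fo_scale scaleC_diff_right)

lemma T_diff: "bessel (f::nat \<Rightarrow> 'a::chilbert_space) B \<Longrightarrow>
  (x - y) - frame_op f (x - y) = (x - frame_op f x) - (y - frame_op f y)"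
  by (simp add: fo_diff)

lemma T_sum: "bessel (f::nat \<Rightarrow> 'a::chilbert_space) B \<Longrightarrow>
  (\<Sum>i\<in>I. g i) - frame_op f (\<Sum>i\<in>I. g i) = (\<Sum>i\<in>I. g i - frame_op f (g i))"
  by (simp add: fo_sum sum_subtractf)

lemma range_T_csubspace: assumes "bessel (f::nat \<Rightarrow> 'a::chilbert_space) B"
  shows "csubspace (range (\<lambda>x. x - frame_op f x))"
  unfolding csubspace_def
proof (intro conjI ballI allI)
  show "0 \<in> range (\<lambda>x. x - frame_op f x)" using fo_zero[OF assms] by (intro range_eqI[of _ _ 0]) simp
next
  fix u v assume "u \<in> range (\<lambda>x. x - frame_op f x)" "v \<in> range (\<lambda>x. x - frame_op f x)"
  then obtain x y where "u = x - frame_op f x" "v = y - frame_op f y" by blast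
  then show "u + v \<in> range (\<lambda>x. x - frame_op f x)" using T_add[OF assms, of x y] by (intro range_eqI[of _ _ "x + y"]) simp
next
  fix a u assume "u \<in> range (\<lambda>x. x - frame_op f x)"
  then obtain x where "u = x - frame_op f x" by blast
  then show "a *\<^sub>C u \<in> range (\<lambda>x. x - frame_op f x)" using T_scale[OF assms, of a x] by (intro range_eqI[of _ _ "a *\<^sub>C x"]) simp
qed

lemma image_cspan:
  assumes add: "\<And>x y. T (x + y) = T x + T y" and sc: "\<And>a x. T (a *\<^sub>C x) = a *\<^sub>C T x"
    and v: "v \<in> cspan S"
  shows "T v \<in> cspan (T ` S)"
proof -
  have T0: "T 0 = 0" using add[of 0 0] by simp
  have Tsum: "T (\<Sum>i\<in>I. g i) = (\<Sum>i\<in>I. T (g i))" for I and g :: "'a \<Rightarrow> 'a"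
    by (induction I rule: infinite_finite_induct) (auto simp: T0 add)
  obtain U c where t: "finite U" "U \<subseteq> S" "v = (\<Sum>t\<in>U. c t *\<^sub>C t)" using v by (rule cspanE)
  have "T v = (\<Sum>t\<in>U. c t *\<^sub>C T t)" unfolding t(3) Tsum sc ..
  also have "\<dots> \<in> cspan (T ` S)" using t(2)
    by (intro csubspace_sum[OF csubspace_cspan] csubspace_scale[OF csubspace_cspan] subsetD[OF cspan_superset]) auto
  finally show ?thesis .
qed

lemma dir_c_a:
  assumes b: "bessel (f::nat \<Rightarrow> 'a::chilbert_space) B"
    and M: "finite_codim M" "\<forall>x\<in>M. ((\<lambda>n. cinner x (f n) *\<^sub>C f n) sums x)"
  shows "cfinite_dim (range (\<lambda>x. x - frame_op f x))"
proof -
  let ?T = "\<lambda>x. x - frame_op f x"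
  obtain S where S: "finite S" "\<forall>x. \<exists>m\<in>M. x - m \<in> cspan S" using M(1) unfolding finite_codim_def by blast
  have Tm: "?T m = 0" if "m \<in> M" for m
  proof -
    have "(\<lambda>n. cinner m (f n) *\<^sub>C f n) sums m" using M(2) that by blast
    then have "frame_op f m = m" using fo_sums[OF b, of m] by (simp add: sums_unique2)
    then show ?thesis by simp
  qed
  have "range ?T = cspan (?T ` S)"
  proof
    show "range ?T \<subseteq> cspan (?T ` S)"
    proof
      fix u assume "u \<in> range ?T"
      then obtain x where x: "u = ?T x" by blast
      obtain m where m: "m \<in> M" "x - m \<in> cspan S" using S(2) by blast
      have "?T (x - m) \<in> cspan (?T ` S)"
        using m(2) by (rule image_cspan[OF T_add[OF b] T_scale[OF b]])
      moreover have "?T (x - m) = u" using T_diff[OF b, of x m] Tm[OF m(1)] x by simp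
      ultimately show "u \<in> cspan (?T ` S)" by simp
    qed
  next
    show "cspan (?T ` S) \<subseteq> range ?T"
      by (rule cspan_minimal[OF range_T_csubspace[OF b]]) auto
  qed
  then show ?thesis unfolding cfinite_dim_def using S(1) by blast
qed

lemma dir_a_c:
  assumes b: "bessel (f::nat \<Rightarrow> 'a::chilbert_space) B"
    and a: "cfinite_dim (range (\<lambda>x. x - frame_op f x))"
  shows "\<exists>M. csubspace M \<and> closed M \<and> finite_codim M \<and> (\<forall>x\<in>M. ((\<lambda>n. cinner x (f n) *\<^sub>C f n) sums x))"
proof -
  let ?T = "\<lambda>x. x - frame_op f x"
  define M where "M = {x. ?T x = 0}"
  obtain R where R: "finite R" "cspan R = range ?T" using a unfolding cfinite_dim_def by blast
  have "\<forall>r\<in>R. \<exists>p. ?T p = r" using R(2) cspan_superset[of R] by auto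
  then obtain p where p: "\<And>r. r \<in> R \<Longrightarrow> ?T (p r) = r" by metis
  have sub: "csubspace M" unfolding M_def csubspace_def
    by (auto simp: fo_add[OF b] fo_scale[OF b] fo_zero[OF b])
  have cont: "continuous_on UNIV (frame_op f)" by (rule linear_continuous_on[OF fo_bounded_linear[OF b]])
  have cl: "closed M" unfolding M_def
    by (intro closed_Collect_eq continuous_intros cont)
  have fc: "finite_codim M" unfolding finite_codim_def
  proof (intro exI[of _ "p ` R"] conjI allI)
    show "finite (p ` R)" using R(1) by simp
    fix x
    have "?T x \<in> cspan R" using R(2) by simp
    then obtain U c where t: "finite U" "U \<subseteq> R" "?T x = (\<Sum>t\<in>U. c t *\<^sub>C t)" by (rule cspanE)
    define m where "m = x - (\<Sum>t\<in>U. c t *\<^sub>C p t)"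
    have "?T m = ?T x - (\<Sum>t\<in>U. c t *\<^sub>C ?T (p t))"
      unfolding m_def T_diff[OF b] T_sum[OF b] T_scale[OF b] ..
    also have "(\<Sum>t\<in>U. c t *\<^sub>C ?T (p t)) = (\<Sum>t\<in>U. c t *\<^sub>C t)"
      using t(2) p by (intro sum.cong) auto
    finally have "m \<in> M" unfolding M_def using t(3) by simp
    moreover have "x - m \<in> cspan (p ` R)" unfolding m_def using t(2)
      by (simp, intro csubspace_sum[OF csubspace_cspan] csubspace_scale[OF csubspace_cspan] subsetD[OF cspan_superset]) auto
    ultimately show "\<exists>m\<in>M. x - m \<in> cspan (p ` R)" by blast
  qed
  have "\<forall>x\<in>M. (\<lambda>n. cinner x (f n) *\<^sub>C f n) sums x"
  proof
    fix x assume "x \<in> M"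
    then have "frame_op f x = x" unfolding M_def by simp
    then show "(\<lambda>n. cinner x (f n) *\<^sub>C f n) sums x" using fo_sums[OF b, of x] by simp
  qed
  then show ?thesis using sub cl fc by blast
qed


lemma l2_cinner_right_of: "l2 (\<lambda>n. cinner z (g n)) \<Longrightarrow> l2 (\<lambda>n. cinner (g n) z)"
  using l2_cnj[of "\<lambda>n. cinner z (g n)"] by (simp add: cinner_commute[of z])

lemma ON_basis_of_fd:
  assumes "cfinite_dim (L::'a::complex_inner set)"
  obtains e N where "ci.ON e N" "L \<subseteq> cspan (e ` {..<N})"
proof -
  obtain Q where Q: "finite Q" "cspan Q = L" using assms unfolding cfinite_dim_def by blast
  obtain x :: "nat \<Rightarrow> 'a" and N :: nat where x: "x ` {..<N} = Q" by (rule finite_enum[OF Q(1)])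
  from ci.gs_exists obtain e where e: "ci.gsP N x e" ..
  have sp: "\<forall>i<N. x i \<in> cspan (e ` {..<Suc i})" using e unfolding ci.gsP_def by (elim conjE)
  have "Q \<subseteq> cspan (e ` {..<N})"
  proof
    fix q assume "q \<in> Q"
    then obtain i where i: "i < N" "q = x i" using x by auto
    have "e ` {..<Suc i} \<subseteq> e ` {..<N}" using i by auto
    then show "q \<in> cspan (e ` {..<N})" using sp i by (auto dest: subsetD[OF cspan_mono])
  qed
  then have "L \<subseteq> cspan (e ` {..<N})" unfolding Q(2)[symmetric] by (rule cspan_minimal[OF csubspace_cspan])
  then show ?thesis by (rule that[OF ci.gsP_ON[OF e]])
qed

lemma dir_b_a:
  assumes fr: "is_frame (f::nat \<Rightarrow> 'a::chilbert_space)"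
    and L: "cfinite_dim L" "\<forall>n. g n \<in> L" and ph: "is_parseval_frame (\<lambda>n. f n + g n)"
  shows "cfinite_dim (range (\<lambda>x. x - frame_op f x))"
proof -
  obtain A B where b: "bessel f B" using frame_bessel[OF fr] by blast
  define h where "h n = f n + g n" for n
  have ph': "is_parseval_frame h" using ph unfolding h_def .
  have bh: "bessel h 1" by (rule parseval_bessel[OF ph'])
  obtain e N where on: "ci.ON e N" and Lsub: "L \<subseteq> cspan (e ` {..<N})" using ON_basis_of_fd[OF L(1)] by blast
  have gexp: "g n = (\<Sum>i<N. cinner (g n) (e i) *\<^sub>C e i)" for n
    using L(2) Lsub by (intro cspan_expand[OF on]) auto
  have l2g: "l2 (\<lambda>n. cinner z (g n))" for z
  proof -
    have "l2 (\<lambda>n. cinner z (h n) - cinner z (f n))" by (rule l2_diff[OF l2_bessel[OF bh] l2_bessel[OF b]])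
    then show ?thesis by (simp add: h_def cinner_add_right)
  qed
  define w where "w i = (\<Sum>n. cinner (e i) (g n) *\<^sub>C h n)" for i
  define a where "a i z = (\<Sum>n. cinner z (f n) * cinner (g n) (e i))" for i z
  define R where "R z = (\<Sum>i<N. cinner z (e i) *\<^sub>C w i) + (\<Sum>i<N. a i z *\<^sub>C e i)" for z
  have TR: "z - frame_op f z = R z" for z
  proof -
    have key: "cinner (z - frame_op f z) y = cinner (R z) y" for y
    proof -
      have s1: "(\<lambda>n. cinner z (h n) * cinner (h n) y) sums cinner z y"
        using fo_cinner[OF bh, of z y] parseval_recon[OF ph', of z] by simp
      have s2: "(\<lambda>n. cinner z (f n) * cinner (f n) y) sums cinner (frame_op f z) y"
        by (rule fo_cinner[OF b])
      have sT: "(\<lambda>n. cinner z (h n) * cinner (h n) y - cinner z (f n) * cinner (f n) y) sums cinner (z - frame_op f z) y"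
        unfolding cinner_diff_left by (rule sums_diff[OF s1 s2])
      have s3: "(\<lambda>n. cinner z (e i) * (cinner (e i) (g n) * cinner (h n) y)) sums (cinner z (e i) * cinner (w i) y)" for i
        unfolding w_def by (rule sums_mult[OF bessel_cinner_sums[OF bh l2g]])
      have s4: "(\<lambda>n. (cinner z (f n) * cinner (g n) (e i)) * cinner (e i) y) sums (a i z * cinner (e i) y)" for i
        unfolding a_def
        by (rule sums_mult2[OF summable_sums[OF l2_prod[OF l2_bessel[OF b] l2_cinner_right_of[OF l2g]]]])
      have sR: "(\<lambda>n. (\<Sum>i<N. cinner z (e i) * (cinner (e i) (g n) * cinner (h n) y))
                + (\<Sum>i<N. (cinner z (f n) * cinner (g n) (e i)) * cinner (e i) y))
              sums cinner (R z) y"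
        unfolding R_def cinner_add_left cinner_sum_left cinner_scaleC_left
        by (rule sums_add[OF sums_sum[OF s3] sums_sum[OF s4]])
      have pt: "cinner z (h n) * cinner (h n) y - cinner z (f n) * cinner (f n) y
          = (\<Sum>i<N. cinner z (e i) * (cinner (e i) (g n) * cinner (h n) y))
                + (\<Sum>i<N. (cinner z (f n) * cinner (g n) (e i)) * cinner (e i) y)" for n
      proof -
        have g1: "cinner z (g n) = (\<Sum>i<N. cinner z (e i) * cinner (e i) (g n))"
          by (subst gexp[of n]) (simp add: cinner_sum_right cinner_scaleC_right cinner_commute[of "e _" "g n"] mult.commute)
        have g2: "cinner (g n) y = (\<Sum>i<N. cinner (g n) (e i) * cinner (e i) y)"
          by (subst gexp[of n]) (simp add: cinner_sum_left cinner_scaleC_left)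
        have "(\<Sum>i<N. cinner z (e i) * (cinner (e i) (g n) * cinner (h n) y)) = cinner z (g n) * cinner (h n) y"
          unfolding g1 sum_distrib_right by (simp add: mult.assoc)
        moreover have "(\<Sum>i<N. (cinner z (f n) * cinner (g n) (e i)) * cinner (e i) y) = cinner z (f n) * cinner (g n) y"
          unfolding g2 sum_distrib_left by (simp add: mult.assoc)
        moreover have "cinner z (h n) * cinner (h n) y - cinner z (f n) * cinner (f n) y
            = cinner z (g n) * cinner (h n) y + cinner z (f n) * cinner (g n) y"
          by (simp add: h_def cinner_add_left cinner_add_right algebra_simps)
        ultimately show ?thesis by simp
      qed
      show ?thesis using sT sR unfolding pt by (rule sums_unique2)
    qed
    have "cinner (z - frame_op f z - R z) (z - frame_op f z - R z) = 0"
      unfolding cinner_diff_left[of "z - frame_op f z" "R z"] key by simp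
    then show ?thesis by simp
  qed
  have fin: "finite (w ` {..<N} \<union> e ` {..<N})" by simp
  have "range (\<lambda>x. x - frame_op f x) \<subseteq> cspan (w ` {..<N} \<union> e ` {..<N})"
  proof
    fix u assume "u \<in> range (\<lambda>x. x - frame_op f x)"
    then obtain z where z: "u = z - frame_op f z" by blast
    have sub: "csubspace (cspan (w ` {..<N} \<union> e ` {..<N}))" by (rule csubspace_cspan)
    have "R z \<in> cspan (w ` {..<N} \<union> e ` {..<N})" unfolding R_def
      by (intro csubspace_add[OF sub] csubspace_sum[OF sub] csubspace_scale[OF sub] subsetD[OF cspan_superset]) auto
    then show "u \<in> cspan (w ` {..<N} \<union> e ` {..<N})" using TR z by simp
  qed
  then show ?thesis by (rule subspace_finite_dim[OF fin range_T_csubspace[OF b]])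
qed


lemma herm_S:
  assumes fr: "is_frame (f::nat \<Rightarrow> 'a::chilbert_space)"
  shows "herm (\<lambda>x y. cinner (frame_op f x) y)"
proof -
  obtain A B :: real where A: "0 < A" and b: "bessel f B" and low: "\<And>x::'a. A * (norm x)\<^sup>2 \<le> (\<Sum>n. (cmod (cinner x (f n)))\<^sup>2)"
    using frame_bessel[OF fr] by blast
  show ?thesis
  proof
    fix x y z :: 'a and a :: complex
    show "cinner (frame_op f (x + y)) z = cinner (frame_op f x) z + cinner (frame_op f y) z"
      by (simp add: fo_add[OF b] cinner_add_left)
    show "cinner (frame_op f (a *\<^sub>C x)) y = a * cinner (frame_op f x) y"
      by (simp add: fo_scale[OF b] cinner_scaleC_left)
    show "cinner (frame_op f x) y = cnj (cinner (frame_op f y) x)"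
      unfolding fo_selfadj[OF b, of x y] by (rule cinner_commute)
    have nn: "0 \<le> (\<Sum>n. (cmod (cinner x (f n)))\<^sup>2)"
      using b by (intro suminf_nonneg) (auto simp: bessel_def)
    then show "0 \<le> Re (cinner (frame_op f x) x)" by (simp add: fo_quad[OF b])
  next
    fix x :: 'a assume "cinner (frame_op f x) x = 0"
    then have "(\<Sum>n. (cmod (cinner x (f n)))\<^sup>2) = 0" by (simp add: fo_quad[OF b])
    then have "A * (norm x)\<^sup>2 \<le> 0" using low[of x] by simp
    then have "(norm x)\<^sup>2 \<le> 0" using A by (simp add: mult_le_0_iff)
    then show "x = 0" by simp
  qed
qed

lemma ON_basis_of_fd2:
  assumes "cfinite_dim (L::'a::complex_inner set)"
  obtains e N where "ci.ON e N" "L \<subseteq> cspan (e ` {..<N})" "\<And>i. i < N \<Longrightarrow> e i \<in> L"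
proof -
  obtain Q where Q: "finite Q" "cspan Q = L" using assms unfolding cfinite_dim_def by blast
  obtain x :: "nat \<Rightarrow> 'a" and N :: nat where x: "x ` {..<N} = Q" by (rule finite_enum[OF Q(1)])
  from ci.gs_exists obtain e where e: "ci.gsP N x e" ..
  have sp: "\<forall>i<N. x i \<in> cspan (e ` {..<Suc i})" using e unfolding ci.gsP_def by (elim conjE)
  have sp1: "\<forall>i<N. e i \<in> cspan (x ` {..<Suc i})" using e unfolding ci.gsP_def by (elim conjE)
  have "Q \<subseteq> cspan (e ` {..<N})"
  proof
    fix q assume "q \<in> Q"
    then obtain i where i: "i < N" "q = x i" using x by auto
    have "e ` {..<Suc i} \<subseteq> e ` {..<N}" using i by auto
    then show "q \<in> cspan (e ` {..<N})" using sp i by (auto dest: subsetD[OF cspan_mono])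
  qed
  then have 1: "L \<subseteq> cspan (e ` {..<N})" unfolding Q(2)[symmetric] by (rule cspan_minimal[OF csubspace_cspan])
  have 2: "e i \<in> L" if "i < N" for i
  proof -
    have "x ` {..<Suc i} \<subseteq> Q" using x that by auto
    then show ?thesis using sp1 that Q(2) by (auto dest: subsetD[OF cspan_mono])
  qed
  show ?thesis by (rule that[OF ci.gsP_ON[OF e] 1 2])
qed


lemma dir_a_b:
  assumes fr: "is_frame (f::nat \<Rightarrow> 'a::chilbert_space)"
    and a: "cfinite_dim (range (\<lambda>x. x - frame_op f x))"
  shows "\<exists>L g. csubspace L \<and> cfinite_dim L \<and> (\<forall>n. g n \<in> L) \<and> is_parseval_frame (\<lambda>n. f n + g n)"
proof -
  obtain A B :: real where b: "bessel f B" using frame_bessel[OF fr] by blast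
  define K where "K = range (\<lambda>x. x - frame_op f x)"
  have Ksub: "csubspace K" unfolding K_def by (rule range_T_csubspace[OF b])
  obtain e N where on: "ci.ON e N" and Kin: "K \<subseteq> cspan (e ` {..<N})" and eK: "\<And>i. i < N \<Longrightarrow> e i \<in> K"
    using ON_basis_of_fd2[OF a[folded K_def]] by blast
  have KE: "K = cspan (e ` {..<N})"
    using Kin cspan_minimal[OF Ksub, of "e ` {..<N}"] eK by blast
  interpret sS: herm "\<lambda>x y. cinner (frame_op f x) y" by (rule herm_S[OF fr])
  from sS.gs_exists obtain u where gu: "sS.gsP N e u" ..
  have uON: "sS.ON u N" by (rule sS.gsP_ON[OF gu])
  have usp: "\<forall>i<N. u i \<in> cspan (e ` {..<Suc i})" using gu unfolding sS.gsP_def by (elim conjE)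
  have unz0: "\<forall>i<N. e i \<notin> cspan (e ` {..<i}) \<longrightarrow> u i \<noteq> 0" using gu unfolding sS.gsP_def by (elim conjE)
  have uK: "u i \<in> K" if "i < N" for i
  proof -
    have "e ` {..<Suc i} \<subseteq> e ` {..<N}" using that by auto
    then show ?thesis using usp that KE by (auto dest: subsetD[OF cspan_mono])
  qed
  have unz: "u i \<noteq> 0" if "i < N" "e i \<noteq> 0" for i
  proof -
    have "e i \<notin> cspan (e ` {..<i})"
    proof
      assume "e i \<in> cspan (e ` {..<i})"
      then have "cinner (e i) (e i) = 0"
      proof (rule ci.cspan_orth)
        fix a assume "a \<in> e ` {..<i}"
        then obtain j where "j < i" "a = e j" by auto
        then show "cinner a (e i) = 0" using on that unfolding ci.ON_def by auto
      qed
      then show False using that by simp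
    qed
    then show ?thesis using unz0 that by blast
  qed
  have SK: "frame_op f k \<in> K" if "k \<in> K" for k
  proof -
    have "k - frame_op f k \<in> K" unfolding K_def by simp
    then have "k - (k - frame_op f k) \<in> K" using csubspace_diff[OF Ksub that] by blast
    then show ?thesis by simp
  qed
  have Tsa: "cinner (a - frame_op f a) c = cinner a (c - frame_op f c)" for a c
    by (simp add: cinner_diff_left cinner_diff_right fo_selfadj[OF b])
  have Sq: "frame_op f q = q" if q: "\<And>j. j < N \<Longrightarrow> cinner q (e j) = 0" for q
  proof -
    define t where "t = q - frame_op f q"
    have "t - frame_op f t \<in> cspan (e ` {..<N})" unfolding KE[symmetric] K_def by simp
    then have "cinner (t - frame_op f t) q = 0"
    proof (rule ci.cspan_orth)
      fix a assume "a \<in> e ` {..<N}"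
      then obtain j where "j < N" "a = e j" by auto
      then show "cinner a q = 0" using q[of j] cinner_commute[of a q] by simp
    qed
    then have "cinner q (t - frame_op f t) = 0" using cinner_commute[of q "t - frame_op f t"] by simp
    then have "cinner t t = 0" unfolding t_def using Tsa[of q "q - frame_op f q"] by simp
    then show ?thesis unfolding t_def by simp
  qed
  define g where "g n = (\<Sum>i<N. cinner (f n) (u i) *\<^sub>C e i) - (\<Sum>i<N. cinner (f n) (e i) *\<^sub>C e i)" for n
  have gK: "g n \<in> K" for n
    unfolding g_def KE by (rule csubspace_diff[OF csubspace_cspan proj_in proj_in])
  have fdK: "cfinite_dim K" using a unfolding K_def .
  have pars: "is_parseval_frame (\<lambda>n. f n + g n)"
    unfolding is_parseval_frame_def
  proof
    fix z
    define c where "c i = cinner z (e i)" for i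
    define v where "v = (\<Sum>i<N. c i *\<^sub>C u i)"
    define p where "p = (\<Sum>i<N. c i *\<^sub>C e i)"
    define q where "q = z - p"
    have qe: "cinner q (e j) = 0" if "j < N" for j unfolding q_def p_def c_def by (rule proj_orth[OF on that])
    have eq: "cinner (e j) q = 0" if "j < N" for j using qe[OF that] cinner_commute[of "e j" q] by simp
    have vK: "v \<in> K" unfolding v_def using uK
      by (intro csubspace_sum[OF Ksub] csubspace_scale[OF Ksub]) auto
    have pE: "p \<in> cspan (e ` {..<N})" unfolding p_def by (rule proj_in)
    have eq1: "cinner z (f n + g n) = cinner (v + q) (f n)" for n
      unfolding g_def v_def q_def p_def c_def
      by (simp add: cinner_add_right cinner_diff_right cinner_sum_right cinner_scaleC_right
          cinner_add_left cinner_diff_left cinner_sum_left cinner_scaleC_left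
          cinner_commute[of "f n" "u _"] cinner_commute[of "f n" "e _"] mult.commute)
    have vv: "cinner (frame_op f v) v = (\<Sum>i<N. c i * cnj (c i))"
      unfolding v_def
    proof (rule sS.ON_sum[OF uON])
      fix i assume "i < N" "u i = 0"
      then have "e i = 0" using unz by blast
      then show "c i = 0" unfolding c_def by simp
    qed
    have vq: "cinner (frame_op f v) q = 0"
    proof -
      have "frame_op f v \<in> cspan (e ` {..<N})" using SK[OF vK] KE by simp
      then show ?thesis
      proof (rule ci.cspan_orth)
        fix a assume "a \<in> e ` {..<N}" then show "cinner a q = 0" using eq by auto
      qed
    qed
    have qv: "cinner (frame_op f q) v = 0"
    proof -
      have "frame_op f q = q" by (rule Sq[OF qe])
      moreover have "v \<in> cspan (e ` {..<N})" using vK KE by simp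
      then have "cinner q v = 0"
      proof (rule ci.cspan_orth_right)
        fix a assume "a \<in> e ` {..<N}" then show "cinner q a = 0" using qe by auto
      qed
      ultimately show ?thesis by simp
    qed
    have qq: "cinner (frame_op f q) q = cinner q q" using Sq[OF qe] by simp
    have Bq: "cinner (frame_op f (v + q)) (v + q) = (\<Sum>i<N. c i * cnj (c i)) + cinner q q"
      by (simp add: fo_add[OF b] cinner_add_left cinner_add_right vv vq qv qq)
    have pp: "cinner p p = (\<Sum>i<N. c i * cnj (c i))"
      unfolding p_def by (rule ci.ON_sum[OF on]) (simp add: c_def)
    have pq: "cinner p q = 0"
      using pE by (rule ci.cspan_orth) (auto simp: eq)
    have qp: "cinner q p = 0"
      using pE by (rule ci.cspan_orth_right) (auto simp: qe)
    have zz: "cinner z z = (\<Sum>i<N. c i * cnj (c i)) + cinner q q"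
    proof -
      have "z = p + q" unfolding q_def by simp
      then have "cinner z z = cinner (p + q) (p + q)" by simp
      also have "\<dots> = cinner p p + cinner p q + cinner q p + cinner q q"
        by (simp add: cinner_add_left cinner_add_right)
      finally show ?thesis using pp pq qp by simp
    qed
    have summ: "summable (\<lambda>n. (cmod (cinner (v + q) (f n)))\<^sup>2)" using b by (simp add: bessel_def)
    have "of_real (\<Sum>n. (cmod (cinner (v + q) (f n)))\<^sup>2) = cinner (frame_op f (v + q)) (v + q)"
      by (rule fo_quad[OF b, symmetric])
    also have "\<dots> = cinner z z" using Bq zz by simp
    also have "\<dots> = of_real ((norm z)\<^sup>2)" by (rule cinner_self)
    finally have "(\<Sum>n. (cmod (cinner (v + q) (f n)))\<^sup>2) = (norm z)\<^sup>2" using of_real_eq_iff by blast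
    then show "summable (\<lambda>n. (cmod (cinner z (f n + g n)))\<^sup>2) \<and> (\<Sum>n. (cmod (cinner z (f n + g n)))\<^sup>2) = (norm z)\<^sup>2"
      using summ unfolding eq1 by simp
  qed
  show ?thesis using Ksub fdK gK pars by blast
qed


theorem theorem2p13:
  fixes f :: "nat \<Rightarrow> 'a::chilbert_space"
  assumes "separable_space TYPE('a)"
    and "infinite_dim_space TYPE('a)"
    and "is_frame f"
  shows "(cfinite_dim (range (\<lambda>x. x - frame_op f x))
          \<longleftrightarrow> (\<exists>L g. csubspace L \<and> cfinite_dim L \<and> (\<forall>n. g n \<in> L) \<and>
                      is_parseval_frame (\<lambda>n. f n + g n)))
       \<and> (cfinite_dim (range (\<lambda>x. x - frame_op f x))
          \<longleftrightarrow> (\<exists>M. csubspace M \<and> closed M \<and> finite_codim M \<and>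
                      (\<forall>x\<in>M. ((\<lambda>n. cinner x (f n) *\<^sub>C f n) sums x))))"
proof -
  obtain A B :: real where b: "bessel f B" using frame_bessel[OF assms(3)] by blast
  show ?thesis
  proof (intro conjI iffI)
    assume "cfinite_dim (range (\<lambda>x. x - frame_op f x))"
    then show "\<exists>L g. csubspace L \<and> cfinite_dim L \<and> (\<forall>n. g n \<in> L) \<and> is_parseval_frame (\<lambda>n. f n + g n)"
      by (rule dir_a_b[OF assms(3)])
  next
    assume "\<exists>L g. csubspace L \<and> cfinite_dim L \<and> (\<forall>n. g n \<in> L) \<and> is_parseval_frame (\<lambda>n. f n + g n)"
    then obtain L g where "cfinite_dim L" "\<forall>n. g n \<in> L" "is_parseval_frame (\<lambda>n. f n + g n)" by blast
    then show "cfinite_dim (range (\<lambda>x. x - frame_op f x))" by (rule dir_b_a[OF assms(3)])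
  next
    assume "cfinite_dim (range (\<lambda>x. x - frame_op f x))"
    then show "\<exists>M. csubspace M \<and> closed M \<and> finite_codim M \<and> (\<forall>x\<in>M. ((\<lambda>n. cinner x (f n) *\<^sub>C f n) sums x))"
      by (rule dir_a_c[OF b])
  next
    assume "\<exists>M. csubspace M \<and> closed M \<and> finite_codim M \<and> (\<forall>x\<in>M. ((\<lambda>n. cinner x (f n) *\<^sub>C f n) sums x))"
    then obtain M where "finite_codim M" "\<forall>x\<in>M. ((\<lambda>n. cinner x (f n) *\<^sub>C f n) sums x)" by blast
    then show "cfinite_dim (range (\<lambda>x. x - frame_op f x))" by (rule dir_c_a[OF b])
  qed
qed

end
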